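(* For every $1\le n\le N$ one has $\Delta^j\mathbb K_n(0)=\Phi_1(n)$, $\Delta^j\mathbb K_n(N)=\Phi_2(n)$, $$\mathbb K_n(x)=K_n(x)-\lambda\,\Phi_1(n)\,\mathscr K_{n-1}^{(0,j)}(x,0)-\mu\,\Phi_2(n)\,\mathscr K_{n-1}^{(0,j)}(x,N),$$ and, as an identity of rational functions of $x$, $$\mathbb K_n(x)=\mathscr C_{1,n}(x)\,K_n(x)+\mathscr D_{1,n}(x)\,K_{n-1}(x).$$
   Context: Fix an integer $N\ge 1$ and $0<p<1$. Notation: $(a)_0=1$, $(a)_k=a(a+1)\cdots(a+k-1)$ (Pochhammer symbol); $[z]_0=1$, $[z]_k=z(z-1)\cdots(z-k+1)$ (falling factorial). For a function $f$, $\Delta f(x)=f(x+1)-f(x)$, $\nabla f(x)=f(x)-f(x-1)$, $\Delta^0$ is the identity and $\Delta^k=\Delta\circ\Delta^{k-1}$. For $0\le n\le N$ the monic Kravchuk polynomial is $K_n(x)=p^n(-N)_n\sum_{k=0}^{n}\frac{(-n)_k(-x)_k}{(-N)_k\,k!}p^{-k}$, and $K_{-1}=0$; these are monic of degree $n$ and orthogonal on $\{0,\dots,N\}$ with respect to the binomial weight $w(x)=\binom{N}{x}p^x(1-p)^{N-x}$, with $\|K_n\|^2=\sum_{x=0}^N K_n(x)^2w(x)=n!(-N)_np^n(p-1)^n$. For $1\le n\le N+1$ and integers $i,l\ge0$, $\mathscr K_{n-1}^{(i,l)}(x,y)=\sum_{k=0}^{n-1}\frac{\Delta^iK_k(x)\,\Delta^lK_k(y)}{\|K_k\|^2}$.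 Fix $\lambda,\mu>0$ and an integer $j\ge 0$. On real polynomials define $\langle f,g\rangle_{\lambda,\mu}=\sum_{x=0}^N f(x)g(x)w(x)+\lambda\Delta^jf(0)\Delta^jg(0)+\mu\Delta^jf(N)\Delta^jg(N)$. For $0\le n\le N$, $\mathbb K_n=\mathbb K_n^{(j)}$ is the monic polynomial of degree $n$ with $\langle\mathbb K_n,q\rangle_{\lambda,\mu}=0$ for all polynomials $q$ of degree $<n$ (Kravchuk–Sobolev polynomials). For $1\le n\le N$: $\mathscr A_n(x,y)=\frac{j!}{\|K_{n-1}\|^2[x-y]_{j+1}}\sum_{k=0}^{j}\frac{\Delta^kK_{n-1}(y)}{k!}[x-y]_k$, $\mathscr B_n(x,y)=-\frac{j!}{\|K_{n-1}\|^2[x-y]_{j+1}}\sum_{k=0}^{j}\frac{\Delta^kK_{n}(y)}{k!}[x-y]_k$; $k_{00}=\mathscr K^{(j,j)}_{n-1}(0,0)$, $k_{0N}=\mathscr K^{(j,j)}_{n-1}(0,N)$, $k_{N0}=\mathscr K^{(j,j)}_{n-1}(N,0)$, $k_{NN}=\mathscr K^{(j,j)}_{n-1}(N,N)$, $d_0=\Delta^jK_n(0)$, $d_N=\Delta^jK_n(N)$, $\delta_n=(1+\lambda k_{00})(1+\mu k_{NN})-\lambda\mu k_{0N}k_{N0}$ (which is nonzero), $\Phi_1(n)=\frac{d_0(1+\mu k_{NN})-\mu k_{0N}d_N}{\delta_n}$, $\Phi_2(n)=\frac{(1+\lambda k_{00})d_N-\lambda k_{N0}d_0}{\delta_n}$;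 $\mathscr C_{1,n}(x)=1-\lambda\Phi_1(n)\mathscr A_n(x,0)-\mu\Phi_2(n)\mathscr A_n(x,N)$ and $\mathscr D_{1,n}(x)=-\lambda\Phi_1(n)\mathscr B_n(x,0)-\mu\Phi_2(n)\mathscr B_n(x,N)$. *)

theory Defs
  imports "HOL-Computational_Algebra.Polynomial"
begin

definition fall :: "real \<Rightarrow> nat \<Rightarrow> real" where
  "fall z k = (\<Prod>i<k. (z - of_nat i))"

definition fdiff :: "(real \<Rightarrow> real) \<Rightarrow> real \<Rightarrow> real" where
  "fdiff f x = f (x + 1) - f x"

definition fdiffs :: "nat \<Rightarrow> (real \<Rightarrow> real) \<Rightarrow> real \<Rightarrow> real" where
  "fdiffs k f = (fdiff ^^ k) f"

definition bweight :: "nat \<Rightarrow> real \<Rightarrow> nat \<Rightarrow> real" where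
  "bweight N p x = real (N choose x) * p ^ x * (1 - p) ^ (N - x)"

text \<open>Monic Kravchuk polynomial K_n, as a function of x.\<close>
definition kraw :: "nat \<Rightarrow> real \<Rightarrow> nat \<Rightarrow> real \<Rightarrow> real" where
  "kraw N p n x = p ^ n * pochhammer (- real N) n *
     (\<Sum>k=0..n. pochhammer (- real n) k * pochhammer (- x) k /
                 (pochhammer (- real N) k * fact k) * (1 / p) ^ k)"

definition kraw_norm2 :: "nat \<Rightarrow> real \<Rightarrow> nat \<Rightarrow> real" where
  "kraw_norm2 N p n = (\<Sum>x=0..N. (kraw N p n (real x))\<^sup>2 * bweight N p x)"

definition kraw_ker :: "nat \<Rightarrow> real \<Rightarrow> nat \<Rightarrow> nat \<Rightarrow> nat \<Rightarrow> real \<Rightarrow> real \<Rightarrow> real" where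
  "kraw_ker N p i l m x y =
     (\<Sum>k=0..m. fdiffs i (kraw N p k) x * fdiffs l (kraw N p k) y / kraw_norm2 N p k)"

definition sob_ip :: "nat \<Rightarrow> real \<Rightarrow> real \<Rightarrow> real \<Rightarrow> nat \<Rightarrow> real poly \<Rightarrow> real poly \<Rightarrow> real" where
  "sob_ip N p lam mu j f g =
     (\<Sum>x=0..N. poly f (real x) * poly g (real x) * bweight N p x)
     + lam * fdiffs j (poly f) 0 * fdiffs j (poly g) 0
     + mu * fdiffs j (poly f) (real N) * fdiffs j (poly g) (real N)"

definition calA :: "nat \<Rightarrow> real \<Rightarrow> nat \<Rightarrow> nat \<Rightarrow> real \<Rightarrow> real \<Rightarrow> real" where
  "calA N p j n x y =
     fact j / (kraw_norm2 N p (n - 1) * fall (x - y) (j + 1)) *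
     (\<Sum>k=0..j. fdiffs k (kraw N p (n - 1)) y / fact k * fall (x - y) k)"

definition calB :: "nat \<Rightarrow> real \<Rightarrow> nat \<Rightarrow> nat \<Rightarrow> real \<Rightarrow> real \<Rightarrow> real" where
  "calB N p j n x y =
     - (fact j / (kraw_norm2 N p (n - 1) * fall (x - y) (j + 1))) *
     (\<Sum>k=0..j. fdiffs k (kraw N p n) y / fact k * fall (x - y) k)"

definition delta_n :: "nat \<Rightarrow> real \<Rightarrow> real \<Rightarrow> real \<Rightarrow> nat \<Rightarrow> nat \<Rightarrow> real" where
  "delta_n N p lam mu j n =
     (1 + lam * kraw_ker N p j j (n - 1) 0 0) * (1 + mu * kraw_ker N p j j (n - 1) (real N) (real N))
     - lam * mu * kraw_ker N p j j (n - 1) 0 (real N) * kraw_ker N p j j (n - 1) (real N) 0"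

definition Phi1 :: "nat \<Rightarrow> real \<Rightarrow> real \<Rightarrow> real \<Rightarrow> nat \<Rightarrow> nat \<Rightarrow> real" where
  "Phi1 N p lam mu j n =
     (fdiffs j (kraw N p n) 0 * (1 + mu * kraw_ker N p j j (n - 1) (real N) (real N))
      - mu * kraw_ker N p j j (n - 1) 0 (real N) * fdiffs j (kraw N p n) (real N))
     / delta_n N p lam mu j n"

definition Phi2 :: "nat \<Rightarrow> real \<Rightarrow> real \<Rightarrow> real \<Rightarrow> nat \<Rightarrow> nat \<Rightarrow> real" where
  "Phi2 N p lam mu j n =
     ((1 + lam * kraw_ker N p j j (n - 1) 0 0) * fdiffs j (kraw N p n) (real N)
      - lam * kraw_ker N p j j (n - 1) (real N) 0 * fdiffs j (kraw N p n) 0)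
     / delta_n N p lam mu j n"

definition calC1 :: "nat \<Rightarrow> real \<Rightarrow> real \<Rightarrow> real \<Rightarrow> nat \<Rightarrow> nat \<Rightarrow> real \<Rightarrow> real" where
  "calC1 N p lam mu j n x =
     1 - lam * Phi1 N p lam mu j n * calA N p j n x 0
       - mu * Phi2 N p lam mu j n * calA N p j n x (real N)"

definition calD1 :: "nat \<Rightarrow> real \<Rightarrow> real \<Rightarrow> real \<Rightarrow> nat \<Rightarrow> nat \<Rightarrow> real \<Rightarrow> real" where
  "calD1 N p lam mu j n x =
     - lam * Phi1 N p lam mu j n * calB N p j n x 0
     - mu * Phi2 N p lam mu j n * calB N p j n x (real N)"

end

theory Submission
  imports Defs
begin

section \<open>Falling factorial\<close>

lemma fall_0[simp]: "fall z 0 = 1" by (simp add: fall_def)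

lemma fall_Suc: "fall z (Suc k) = fall z k * (z - of_nat k)"
  by (simp add: fall_def lessThan_Suc mult.commute)

lemma fall_Suc': "fall z (Suc k) = z * fall (z - 1) k"
  unfolding fall_def prod.lessThan_Suc_shift by (simp add: algebra_simps)

lemma fall_add: "fall z (k + l) = fall z k * fall (z - of_nat k) l"
  by (induction l) (auto simp: fall_Suc algebra_simps)

lemma fall_nat_mult: "k \<le> x \<Longrightarrow> fall (real x) k * fact (x - k) = fact x"
proof (induction k)
  case 0 then show ?case by simp
next
  case (Suc k)
  then have "x - k = Suc (x - Suc k)" by simp
  then have "fact (x - k) = real (x - k) * fact (x - Suc k)" by simp
  moreover have "real (x - k) = real x - real k" using Suc by simp
  ultimately have "fall (real x) (Suc k) * fact (x - Suc k) = fall (real x) k * fact (x - k)"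
    by (simp add: fall_Suc)
  then show ?case using Suc by simp
qed

lemma fall_nat: "k \<le> x \<Longrightarrow> fall (real x) k = fact x / fact (x - k)"
  using fall_nat_mult[of k x] by (simp add: field_simps)

lemma fall_nat_zero: "x < k \<Longrightarrow> fall (real x) k = 0"
  unfolding fall_def by (rule prod_zero) auto

lemma fall_nat_nz: "k \<le> x \<Longrightarrow> fall (real x) k \<noteq> 0"
  by (simp add: fall_nat)

lemma fall_diff: "fall z (Suc m) - fall (z - 1) (Suc m) = of_nat (Suc m) * fall (z - 1) m"
proof -
  have "fall z (Suc m) = z * fall (z - 1) m" by (rule fall_Suc')
  moreover have "fall (z - 1) (Suc m) = fall (z - 1) m * (z - 1 - of_nat m)" by (rule fall_Suc)
  ultimately show ?thesis by (simp add: algebra_simps)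
qed

lemma poch_minus_fall: "pochhammer (- z) k = (-1) ^ k * fall z k"
proof -
  have "pochhammer (- z) k = (\<Prod>i<k. (-1) * (z - of_nat i))"
    by (simp add: pochhammer_prod atLeast0LessThan)
  also have "\<dots> = (-1)^k * fall z k" unfolding prod.distrib fall_def by simp
  finally show ?thesis .
qed

section \<open>Differences\<close>

lemma fdiffs_0[simp]: "fdiffs 0 f = f" by (simp add: fdiffs_def)
lemma fdiffs_Suc: "fdiffs (Suc j) f x = fdiffs j f (x + 1) - fdiffs j f x"
  by (simp add: fdiffs_def fdiff_def)
lemma fdiffs_Suc': "fdiffs (Suc j) f = fdiffs j (fdiff f)"
  by (simp only: fdiffs_def funpow_Suc_right comp_def)

lemma fdiffs_lin:
  "fdiffs j (\<lambda>y. \<Sum>k\<in>S. c k * f k y) y0 = (\<Sum>k\<in>S. c k * fdiffs j (f k) y0)"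
proof (induction j arbitrary: y0)
  case 0 then show ?case by simp
next
  case (Suc j)
  show ?case by (simp add: fdiffs_Suc Suc sum_subtractf[symmetric] right_diff_distrib)
qed

lemma fdiffs_add: "fdiffs j (\<lambda>y. f y + g y) y0 = fdiffs j f y0 + fdiffs j g y0"
  by (induction j arbitrary: y0) (simp_all add: fdiffs_Suc)

lemma fdiffs_diff: "fdiffs j (\<lambda>y. f y - g y) y0 = fdiffs j f y0 - fdiffs j g y0"
  by (induction j arbitrary: y0) (simp_all add: fdiffs_Suc)

lemma fdiffs_cmult: "fdiffs j (\<lambda>y. c * f y) y0 = c * fdiffs j f y0"
  by (induction j arbitrary: y0) (simp_all add: fdiffs_Suc right_diff_distrib)

lemma fdiffs_local:
  "(\<And>i. i \<le> j \<Longrightarrow> f (y + of_nat i) = g (y + of_nat i)) \<Longrightarrow> fdiffs j f y = fdiffs j g y"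
proof (induction j arbitrary: y)
  case 0 then show ?case using 0[of 0] by simp
next
  case (Suc j)
  have a: "fdiffs j f (y+1) = fdiffs j g (y+1)"
    using Suc.prems[of "Suc _"] by (intro Suc.IH) (auto simp: add.assoc)
  have b: "fdiffs j f y = fdiffs j g y"
    using Suc.prems by (intro Suc.IH) auto
  show ?case by (simp add: fdiffs_Suc a b)
qed

lemma pascal_sum:
  fixes t :: "nat \<Rightarrow> real"
  shows "(\<Sum>k=0..Suc j. real (Suc j choose k) * t k)
       = (\<Sum>k=0..j. real (j choose k) * t k) + (\<Sum>k=0..j. real (j choose k) * t (Suc k))"
proof -
  have "(\<Sum>k=0..Suc j. real (Suc j choose k) * t k)
       = t 0 + (\<Sum>k=0..j. real (Suc j choose Suc k) * t (Suc k))"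
    by (subst sum.atLeast0_atMost_Suc_shift) simp
  also have "\<dots> = t 0 + (\<Sum>k=0..j. real (j choose Suc k) * t (Suc k))
                    + (\<Sum>k=0..j. real (j choose k) * t (Suc k))"
    by (simp add: sum.distrib algebra_simps)
  also have "t 0 + (\<Sum>k=0..j. real (j choose Suc k) * t (Suc k))
           = (\<Sum>k=0..Suc j. real (j choose k) * t k)"
    by (subst sum.atLeast0_atMost_Suc_shift) simp
  also have "\<dots> = (\<Sum>k=0..j. real (j choose k) * t k)"
    by simp
  finally show ?thesis .
qed

lemma fdiffs_shift: "fdiffs m (\<lambda>z. g (z + 1)) w = fdiffs m g (w + 1)"
  by (induction m arbitrary: w) (simp_all add: fdiffs_Suc)

lemma fdiffs_leibniz:
  "fdiffs j (\<lambda>y. F y * g y) y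
     = (\<Sum>k=0..j. real (j choose k) * (fdiffs k F y * fdiffs (j - k) g (y + of_nat k)))"
proof (induction j arbitrary: F g y)
  case 0 then show ?case by simp
next
  case (Suc j)
  have e: "fdiff (\<lambda>y. F y * g y) = (\<lambda>y. fdiff F y * g (y + 1) + F y * fdiff g y)"
    by (rule ext) (simp add: fdiff_def algebra_simps)
  have "fdiffs (Suc j) (\<lambda>y. F y * g y) y
      = fdiffs j (\<lambda>y. fdiff F y * g (y + 1)) y + fdiffs j (\<lambda>y. F y * fdiff g y) y"
    by (simp add: fdiffs_Suc' e fdiffs_add)
  also have "\<dots> = (\<Sum>k=0..j. real (j choose k) * (fdiffs (Suc k) F y * fdiffs (Suc j - Suc k) g (y + of_nat (Suc k))))
     + (\<Sum>k=0..j. real (j choose k) * (fdiffs k F y * fdiffs (Suc j - k) g (y + of_nat k)))"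
  proof -
    have 1: "fdiffs j (\<lambda>y. fdiff F y * g (y + 1)) y
      = (\<Sum>k=0..j. real (j choose k) * (fdiffs (Suc k) F y * fdiffs (Suc j - Suc k) g (y + of_nat (Suc k))))"
      unfolding Suc.IH[of "fdiff F"]
      by (intro sum.cong refl) (simp add: fdiffs_Suc'[symmetric] fdiffs_shift[where g=g] add_ac)
    have 2: "fdiffs j (\<lambda>y. F y * fdiff g y) y
      = (\<Sum>k=0..j. real (j choose k) * (fdiffs k F y * fdiffs (Suc j - k) g (y + of_nat k)))"
      unfolding Suc.IH[of F]
      by (intro sum.cong refl) (simp add: fdiffs_Suc'[symmetric] Suc_diff_le)
    show ?thesis using 1 2 by simp
  qed
  also have "\<dots> = (\<Sum>k=0..Suc j. real (Suc j choose k) * (fdiffs k F y * fdiffs (Suc j - k) g (y + of_nat k)))"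
    by (subst pascal_sum) simp
  finally show ?case .
qed

lemma fdiffs_recip:
  "fall (x - z) (Suc m) \<noteq> 0 \<Longrightarrow> fdiffs m (\<lambda>z. 1 / (x - z)) z = fact m / fall (x - z) (Suc m)"
proof (induction m arbitrary: z)
  case 0 then show ?case using fall_Suc[of "x - z" 0] by simp
next
  case (Suc m)
  let ?C = "fall (x - z) (Suc (Suc m))"
  have c1: "?C = fall (x - z) (Suc m) * (x - z - of_nat (Suc m))" by (rule fall_Suc)
  have c2: "?C = (x - z) * fall (x - (z + 1)) (Suc m)" using fall_Suc'[of "x - z" "Suc m"]
    by (simp add: algebra_simps)
  have nz1: "fall (x - z) (Suc m) \<noteq> 0" and nz2: "fall (x - (z + 1)) (Suc m) \<noteq> 0"
    and nz3: "x - z \<noteq> 0" and nz4: "x - z - of_nat (Suc m) \<noteq> 0"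
    using Suc.prems c1 c2 by auto
  have "fdiffs (Suc m) (\<lambda>z. 1 / (x - z)) z
      = fact m / fall (x - (z + 1)) (Suc m) - fact m / fall (x - z) (Suc m)"
    by (simp add: fdiffs_Suc Suc.IH nz1 nz2)
  also have "\<dots> = fact m * (x - z) / ?C - fact m * (x - z - of_nat (Suc m)) / ?C"
  proof -
    have "fact m / fall (x - (z + 1)) (Suc m) = fact m * (x - z) / ?C"
      unfolding c2 using nz3 by simp
    moreover have "fact m / fall (x - z) (Suc m) = fact m * (x - z - of_nat (Suc m)) / ?C"
      unfolding c1 using nz4 by simp
    ultimately show ?thesis by simp
  qed
  also have "\<dots> = fact (Suc m) / ?C"
    by (simp add: diff_divide_distrib[symmetric] algebra_simps)
  finally show ?case .
qed

definition ffp :: "nat \<Rightarrow> real poly" where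
  "ffp k = (\<Prod>i<k. [:- of_nat i, 1:])"

definition rfp :: "nat \<Rightarrow> nat \<Rightarrow> real poly" where
  "rfp N m = (\<Prod>i<m. [:real N - of_nat i, -1:])"

lemma poly_ffp: "poly (ffp k) x = fall x k"
  by (simp add: ffp_def poly_prod fall_def)

lemma degree_ffp: "degree (ffp k) = k"
  unfolding ffp_def by (subst degree_prod_eq_sum_degree) auto

lemma lead_ffp: "lead_coeff (ffp k) = 1"
  unfolding ffp_def lead_coeff_prod by simp

lemma poly_rfp: "poly (rfp N m) x = fall (real N - x) m"
  by (simp add: rfp_def poly_prod fall_def algebra_simps)

lemma degree_rfp: "degree (rfp N m) = m"
  unfolding rfp_def by (subst degree_prod_eq_sum_degree) auto

lemma lead_rfp: "lead_coeff (rfp N m) \<noteq> 0"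
  unfolding rfp_def lead_coeff_prod by simp

lemma span_basis:
  fixes G :: "nat \<Rightarrow> real poly"
  assumes "\<And>m. m \<le> d \<Longrightarrow> degree (G m) = m" "\<And>m. m \<le> d \<Longrightarrow> lead_coeff (G m) \<noteq> 0"
    and "degree q \<le> d"
  shows "\<exists>a. q = (\<Sum>m\<le>d. smult (a m) (G m))"
  using assms
proof (induction d arbitrary: q)
  case 0
  have g: "degree (G 0) = 0" "coeff (G 0) 0 \<noteq> 0" using 0(1,2)[of 0] by auto
  have "q = smult (coeff q 0 / coeff (G 0) 0) (G 0)"
  proof (rule poly_eqI)
    fix i show "coeff q i = coeff (smult (coeff q 0 / coeff (G 0) 0) (G 0)) i"
    proof (cases i)
      case 0 then show ?thesis using g by simp
    next
      case (Suc i')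
      then show ?thesis using g 0(3) by (simp add: coeff_eq_0)
    qed
  qed
  then show ?case by (intro exI[of _ "\<lambda>_. coeff q 0 / coeff (G 0) 0"]) simp
next
  case (Suc d)
  define c where "c = coeff q (Suc d) / lead_coeff (G (Suc d))"
  define r where "r = q - smult c (G (Suc d))"
  have gd: "degree (G (Suc d)) = Suc d" "lead_coeff (G (Suc d)) \<noteq> 0" using Suc.prems by auto
  have "degree r \<le> d"
  proof (rule degree_le, intro allI impI)
    fix i assume "d < i"
    show "coeff r i = 0"
    proof (cases "i = Suc d")
      case True then show ?thesis using gd by (simp add: r_def c_def)
    next
      case False
      then have "i > Suc d" using \<open>d < i\<close> by simp
      then show ?thesis using gd Suc.prems(3) by (simp add: r_def coeff_eq_0)
    qed
  qed
  then obtain a where a: "r = (\<Sum>m\<le>d. smult (a m) (G m))"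
    using Suc.IH[of r] Suc.prems by auto
  have "q = r + smult c (G (Suc d))" by (simp add: r_def)
  also have "\<dots> = (\<Sum>m\<le>Suc d. smult ((a(Suc d := c)) m) (G m))"
    unfolding a by (simp add: sum.atMost_Suc)
  finally show ?case by blast
qed

definition kc :: "nat \<Rightarrow> real \<Rightarrow> nat \<Rightarrow> nat \<Rightarrow> real" where
  "kc N p n k = p ^ n * pochhammer (- real N) n *
     (pochhammer (- real n) k / (pochhammer (- real N) k * fact k) * (1 / p) ^ k * (-1) ^ k)"

definition kp :: "nat \<Rightarrow> real \<Rightarrow> nat \<Rightarrow> real poly" where
  "kp N p n = (\<Sum>k=0..n. smult (kc N p n k) (ffp k))"

lemma kraw_fall: "kraw N p n x = (\<Sum>k=0..n. kc N p n k * fall x k)"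
  unfolding kraw_def kc_def sum_distrib_left
  by (intro sum.cong refl) (simp add: poch_minus_fall)

lemma poly_kp: "poly (kp N p n) = kraw N p n"
  by (rule ext) (simp add: kp_def poly_sum poly_ffp kraw_fall)

lemma pochN_nz: "n \<le> N \<Longrightarrow> pochhammer (- real N) n \<noteq> 0"
  by (simp add: poch_minus_fall fall_nat_nz)

lemma kc_top: assumes "n \<le> N" "p > 0" shows "kc N p n n = 1"
proof -
  have "pochhammer (- real n) n = (-1)^n * fact n"
    by (simp add: poch_minus_fall fall_nat)
  then show ?thesis using pochN_nz[OF assms(1)] assms(2)
    by (simp add: kc_def power_one_over field_simps flip: power_mult_distrib)
qed

lemma coeff_kp_top: assumes "n \<le> N" "p > 0" shows "coeff (kp N p n) n = 1"
proof -
  have "coeff (kp N p n) n = (\<Sum>k=0..n. kc N p n k * coeff (ffp k) n)"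
    by (simp add: kp_def coeff_sum)
  also have "\<dots> = kc N p n n * coeff (ffp n) n"
    by (subst sum.remove[of _ n]) (auto simp: coeff_eq_0 degree_ffp intro!: sum.neutral)
  also have "\<dots> = 1" using kc_top[OF assms] lead_ffp[of n] by (simp add: degree_ffp)
  finally show ?thesis .
qed

lemma degree_kp: assumes "n \<le> N" "p > 0" shows "degree (kp N p n) = n"
proof (rule antisym)
  show "degree (kp N p n) \<le> n"
    unfolding kp_def
    by (rule degree_sum_le) (auto intro: order.trans[OF degree_smult_le] simp: degree_ffp)
  show "n \<le> degree (kp N p n)" using coeff_kp_top[OF assms] by (intro le_degree) simp
qed

lemma lead_kp: assumes "n \<le> N" "p > 0" shows "lead_coeff (kp N p n) = 1"
  using coeff_kp_top[OF assms] degree_kp[OF assms] by simp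

section \<open>Orthogonality\<close>

lemma alt_fall_sum:
  "m < n \<Longrightarrow> (\<Sum>k=0..n. real (n choose k) * ((-1)^k * fall (M - real k) m)) = 0"
proof (induction n arbitrary: m M)
  case 0 then show ?case by simp
next
  case (Suc n)
  have "(\<Sum>k=0..Suc n. real (Suc n choose k) * ((-1)^k * fall (M - real k) m))
     = (\<Sum>k=0..n. real (n choose k) * ((-1)^k * (fall (M - real k) m - fall (M - real k - 1) m)))"
    by (subst pascal_sum) (simp add: sum.distrib[symmetric] algebra_simps)
  also have "\<dots> = 0"
  proof (cases m)
    case 0 then show ?thesis by simp
  next
    case (Suc m')
    have "(\<Sum>k=0..n. real (n choose k) * ((-1)^k * (fall (M - real k) m - fall (M - real k - 1) m)))
       = real (Suc m') * (\<Sum>k=0..n. real (n choose k) * ((-1)^k * fall ((M - 1) - real k) m'))"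
      unfolding Suc fall_diff sum_distrib_left by (intro sum.cong refl) (simp add: algebra_simps)
    also have "\<dots> = 0" using Suc.IH[of m' "M - 1"] Suc.prems Suc by simp
    finally show ?thesis .
  qed
  finally show ?case .
qed

lemma fall_real_diff_zero: "x \<le> N \<Longrightarrow> N - x < m \<Longrightarrow> fall (real N - real x) m = 0"
  using fall_nat_zero[of "N - x" m] by (simp add: of_nat_diff)

lemma binom_moment:
  fixes p :: real
  shows "(\<Sum>x=0..N. fall (real x) k * fall (real N - real x) m * bweight N p x)
       = fall (real N) (k + m) * p ^ k * (1 - p) ^ m"
proof (cases "k + m \<le> N")
  case False
  have z: "fall (real x) k * fall (real N - real x) m = 0" if "x \<in> {0..N}" for x
  proof (cases "x < k")
    case True then show ?thesis by (simp add: fall_nat_zero)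
  next
    case False then show ?thesis using that \<open>\<not> k + m \<le> N\<close> by (simp add: fall_real_diff_zero)
  qed
  have "fall (real N) (k + m) = 0" using False by (simp add: fall_nat_zero)
  moreover have "(\<Sum>x=0..N. fall (real x) k * fall (real N - real x) m * bweight N p x) = 0"
    by (rule sum.neutral) (simp add: z)
  ultimately show ?thesis by simp
next
  case True
  then have "N = (N - k - m) + k + m" by simp
  then obtain M where NM: "N = M + k + m" by blast
  let ?f = "\<lambda>x. fall (real x) k * fall (real N - real x) m * bweight N p x"
  have "(\<Sum>x=0..N. ?f x) = (\<Sum>x=0+k..M+k. ?f x)"
  proof (rule sum.mono_neutral_right)
    show "\<forall>x\<in>{0..N} - {0+k..M+k}. ?f x = 0"
    proof
      fix x assume x: "x \<in> {0..N} - {0+k..M+k}"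
      show "?f x = 0"
      proof (cases "x < k")
        case True then show ?thesis by (simp add: fall_nat_zero)
      next
        case False then have "x \<le> N" "N - x < m" using x NM by auto
        then show ?thesis by (simp add: fall_real_diff_zero)
      qed
    qed
  qed (use NM in auto)
  also have "\<dots> = (\<Sum>y=0..M. ?f (y + k))" by (rule sum.shift_bounds_cl_nat_ivl)
  also have "\<dots> = (\<Sum>y=0..M. fall (real N) (k + m) * p ^ k * (1 - p) ^ m *
                      (real (M choose y) * p ^ y * (1 - p) ^ (M - y)))"
  proof (intro sum.cong refl)
    fix y assume "y \<in> {0..M}"
    then have y: "y \<le> M" by simp
    have e1: "real N - real (y + k) = real (M - y + m)" using y NM by (simp add: of_nat_diff)
    have e2: "N - (y + k) = M - y + m" using y NM by simp
    have f1: "fall (real (y + k)) k = fact (y + k) / fact y" using fall_nat[of k "y + k"] by simp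
    have f2: "fall (real (M - y + m)) m = fact (M - y + m) / fact (M - y)" using fall_nat[of m "M - y + m"] by simp
    have f3: "fall (real N) (k + m) = fact N / fact M" using NM fall_nat[of "k + m" N] by simp
    have b1: "real (N choose (y + k)) = fact N / (fact (y + k) * fact (M - y + m))"
      using y NM by (simp add: binomial_fact e2[symmetric])
    have b2: "real (M choose y) = fact M / (fact y * fact (M - y))"
      using y by (simp add: binomial_fact)
    show "?f (y + k) = fall (real N) (k + m) * p ^ k * (1 - p) ^ m *
                      (real (M choose y) * p ^ y * (1 - p) ^ (M - y))"
      unfolding bweight_def e1 e2 f1 f2 f3 b1 b2
      by (simp add: field_simps power_add)
  qed
  also have "\<dots> = fall (real N) (k + m) * p ^ k * (1 - p) ^ m * (p + (1 - p)) ^ M"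
    unfolding binomial_ring[of p "1 - p" M] sum_distrib_left atLeast0AtMost by (simp add: mult.assoc)
  finally show ?thesis by simp
qed

lemma kraw_ortho_fall:
  assumes "m < n" "n \<le> N" "p > 0"
  shows "(\<Sum>x=0..N. kraw N p n (real x) * fall (real N - real x) m * bweight N p x) = 0"
proof -
  let ?A = "p ^ n * pochhammer (- real N) n"
  have "(\<Sum>x=0..N. kraw N p n (real x) * fall (real N - real x) m * bweight N p x)
     = (\<Sum>k=0..n. kc N p n k * (\<Sum>x=0..N. fall (real x) k * fall (real N - real x) m * bweight N p x))"
    unfolding kraw_fall sum_distrib_left sum_distrib_right
    by (subst sum.swap) (simp add: algebra_simps)
  also have "\<dots> = (\<Sum>k=0..n. ?A * (1 - p) ^ m * (real (n choose k) * ((-1)^k * fall (real N - real k) m)))"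
    unfolding binom_moment
  proof (intro sum.cong refl)
    fix k assume "k \<in> {0..n}"
    then have k: "k \<le> n" by simp
    have nz: "fall (real N) k \<noteq> 0" using k assms by (simp add: fall_nat_nz)
    have c: "real (n choose k) = fall (real n) k / fact k"
      using k by (simp add: binomial_fact fall_nat)
    have s: "fall (real N) (k + m) = fall (real N) k * fall (real N - real k) m"
      by (rule fall_add)
    have pk: "(1 / p) ^ k * p ^ k = 1" using assms by (simp add: power_one_over field_simps)
    have sg: "((-1::real)^k) * (-1)^k = 1" by (simp flip: power_mult_distrib)
    have sgnz: "((-1::real)^k) \<noteq> 0" by simp
    have q1: "pochhammer (- real n) k / (pochhammer (- real N) k * fact k) * fall (real N) k
        = fall (real n) k / fact k"
      unfolding poch_minus_fall using nz sgnz by simp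
    have kk: "kc N p n k * fall (real N) k * p ^ k = ?A * ((-1)^k * (fall (real n) k / fact k))"
    proof -
      have "kc N p n k * fall (real N) k * p ^ k = ?A * ((pochhammer (- real n) k / (pochhammer (- real N) k * fact k) * fall (real N) k) * ((1 / p) ^ k * p ^ k) * (-1) ^ k)"
        unfolding kc_def by (simp only: ac_simps)
      also have "\<dots> = ?A * ((-1)^k * (fall (real n) k / fact k))" unfolding q1 pk by simp
      finally show ?thesis .
    qed
    show "kc N p n k * (fall (real N) (k + m) * p ^ k * (1 - p) ^ m)
        = ?A * (1 - p) ^ m * (real (n choose k) * ((-1)^k * fall (real N - real k) m))"
    proof -
      have "kc N p n k * (fall (real N) (k + m) * p ^ k * (1 - p) ^ m)
          = (kc N p n k * fall (real N) k * p ^ k) * (1 - p) ^ m * fall (real N - real k) m"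
        unfolding s by (simp only: ac_simps)
      also have "\<dots> = ?A * (1 - p) ^ m * (real (n choose k) * ((-1)^k * fall (real N - real k) m))"
        unfolding kk c by (simp only: ac_simps)
      finally show ?thesis .
    qed
  qed
  also have "\<dots> = ?A * (1 - p) ^ m * (\<Sum>k=0..n. real (n choose k) * ((-1)^k * fall (real N - real k) m))"
    by (simp add: sum_distrib_left)
  also have "\<dots> = 0" using alt_fall_sum[OF assms(1)] by simp
  finally show ?thesis .
qed

lemma kraw_ortho_poly:
  assumes "degree q < n" "n \<le> N" "p > 0"
  shows "(\<Sum>x=0..N. kraw N p n (real x) * poly q (real x) * bweight N p x) = 0"
proof -
  have "degree q \<le> n - 1" using assms by simp
  then have "\<exists>a. q = (\<Sum>m\<le>n-1. smult (a m) (rfp N m))"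
    by (intro span_basis degree_rfp lead_rfp)
  then obtain a where a: "q = (\<Sum>m\<le>n-1. smult (a m) (rfp N m))" by blast
  have "(\<Sum>x=0..N. kraw N p n (real x) * poly q (real x) * bweight N p x)
      = (\<Sum>m\<le>n-1. a m * (\<Sum>x=0..N. kraw N p n (real x) * fall (real N - real x) m * bweight N p x))"
    unfolding a poly_sum poly_smult poly_rfp sum_distrib_left sum_distrib_right
    by (subst sum.swap) (simp add: algebra_simps)
  also have "\<dots> = 0"
    using assms by (intro sum.neutral ballI) (simp add: kraw_ortho_fall)
  finally show ?thesis .
qed

lemma kraw_ortho:
  assumes "k \<noteq> i" "k \<le> N" "i \<le> N" "p > 0"
  shows "(\<Sum>x=0..N. kraw N p k (real x) * kraw N p i (real x) * bweight N p x) = 0"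
proof (cases "i < k")
  case True
  show ?thesis using kraw_ortho_poly[of "kp N p i" k N p] True assms
    by (simp add: degree_kp poly_kp)
next
  case False
  then have "k < i" using assms by simp
  then have "(\<Sum>x=0..N. kraw N p i (real x) * kraw N p k (real x) * bweight N p x) = 0"
    using kraw_ortho_poly[of "kp N p k" i N p] assms by (simp add: degree_kp poly_kp)
  then show ?thesis by (simp add: mult.commute mult.left_commute)
qed

lemma bweight_pos: "0 < p \<Longrightarrow> p < 1 \<Longrightarrow> x \<le> N \<Longrightarrow> bweight N p x > 0"
  by (simp add: bweight_def)

lemma norm_pos:
  assumes "k \<le> N" "0 < p" "p < 1"
  shows "kraw_norm2 N p k > 0"
proof (rule ccontr)
  assume "\<not> kraw_norm2 N p k > 0"
  moreover have nn: "\<forall>x\<in>{0..N}. 0 \<le> (kraw N p k (real x))\<^sup>2 * bweight N p x"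
    using assms by (auto intro!: mult_nonneg_nonneg less_imp_le[OF bweight_pos])
  moreover have "0 \<le> kraw_norm2 N p k" unfolding kraw_norm2_def
    by (rule sum_nonneg) (use nn in auto)
  ultimately have "kraw_norm2 N p k = 0" by linarith
  then have z: "\<forall>x\<in>{0..N}. (kraw N p k (real x))\<^sup>2 * bweight N p x = 0"
    using sum_nonneg_eq_0_iff[of "{0..N}" "\<lambda>x. (kraw N p k (real x))\<^sup>2 * bweight N p x"] nn
    unfolding kraw_norm2_def by blast
  have roots: "real ` {0..N} \<subseteq> {x. poly (kp N p k) x = 0}"
  proof
    fix y assume "y \<in> real ` {0..N}"
    then obtain x where x: "x \<in> {0..N}" "y = real x" by auto
    then have "bweight N p x > 0" using assms bweight_pos by simp
    moreover have "kraw N p k (real x) = 0 \<or> bweight N p x = 0" using z x by simp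
    ultimately show "y \<in> {x. poly (kp N p k) x = 0}" using x by (simp add: poly_kp)
  qed
  have nz: "kp N p k \<noteq> 0" using lead_kp[OF assms(1,2)] by auto
  have "card (real ` {0..N}) \<le> card {x. poly (kp N p k) x = 0}"
    by (rule card_mono[OF poly_roots_finite[OF nz] roots])
  also have "\<dots> \<le> degree (kp N p k)" by (rule card_poly_roots_bound[OF nz])
  also have "\<dots> = k" using degree_kp[OF assms(1,2)] .
  finally have "card (real ` {0..N}) \<le> k" .
  moreover have "card (real ` {0..N}) = Suc N" by (simp add: card_image inj_on_def)
  ultimately show False using assms by simp
qed

lemma kraw_expand:
  assumes "degree q \<le> d" "d \<le> N" "0 < p" "p < 1"
  shows "poly q x = (\<Sum>k\<le>d. (\<Sum>y=0..N. poly q (real y) * kraw N p k (real y) * bweight N p y)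
                              / kraw_norm2 N p k * kraw N p k x)"
proof -
  have "\<exists>a. q = (\<Sum>m\<le>d. smult (a m) (kp N p m))"
  proof (rule span_basis)
    fix m assume "m \<le> d"
    then show "degree (kp N p m) = m" "lead_coeff (kp N p m) \<noteq> 0"
      using assms degree_kp[of m N p] lead_kp[of m N p] by auto
  qed (use assms in simp)
  then obtain a where a: "q = (\<Sum>m\<le>d. smult (a m) (kp N p m))" by blast
  have c: "(\<Sum>y=0..N. poly q (real y) * kraw N p k (real y) * bweight N p y) = a k * kraw_norm2 N p k"
    if k: "k \<le> d" for k
  proof -
    have "(\<Sum>y=0..N. poly q (real y) * kraw N p k (real y) * bweight N p y)
        = (\<Sum>m\<le>d. a m * (\<Sum>y=0..N. kraw N p m (real y) * kraw N p k (real y) * bweight N p y))"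
      unfolding a poly_sum poly_smult poly_kp sum_distrib_left sum_distrib_right
      by (subst sum.swap) (simp add: algebra_simps)
    also have "\<dots> = a k * (\<Sum>y=0..N. kraw N p k (real y) * kraw N p k (real y) * bweight N p y)"
      using k assms by (subst sum.remove[of _ k]) (auto intro!: sum.neutral simp: kraw_ortho)
    also have "\<dots> = a k * kraw_norm2 N p k"
      by (simp add: kraw_norm2_def power2_eq_square)
    finally show ?thesis .
  qed
  have "poly q x = (\<Sum>k\<le>d. a k * kraw N p k x)"
    unfolding a poly_sum poly_smult poly_kp ..
  also have "\<dots> = (\<Sum>k\<le>d. (\<Sum>y=0..N. poly q (real y) * kraw N p k (real y) * bweight N p y)
                              / kraw_norm2 N p k * kraw N p k x)"
  proof (intro sum.cong refl)
    fix k assume "k \<in> {..d}"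
    then have "k \<le> d" by simp
    moreover then have "kraw_norm2 N p k > 0" using assms norm_pos by auto
    ultimately show "a k * kraw N p k x = (\<Sum>y=0..N. poly q (real y) * kraw N p k (real y) * bweight N p y)
                              / kraw_norm2 N p k * kraw N p k x" by (simp add: c)
  qed
  finally show ?thesis .
qed

section \<open>Three-term recurrence and Christoffel--Darboux\<close>

lemma kp_nz: "k \<le> N \<Longrightarrow> p > 0 \<Longrightarrow> kp N p k \<noteq> 0"
  using lead_kp[of k N p] by auto

lemma xkp_diff_degree:
  assumes "Suc k \<le> N" "p > 0"
  shows "degree (pCons 0 (kp N p k) - kp N p (Suc k)) \<le> k"
proof (rule degree_le, intro allI impI)
  fix i assume "k < i"
  show "coeff (pCons 0 (kp N p k) - kp N p (Suc k)) i = 0"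
  proof (cases "i = Suc k")
    case True then show ?thesis using coeff_kp_top[of k N p] coeff_kp_top[of "Suc k" N p] assms by simp
  next
    case False
    then obtain i' where i': "i = Suc i'" "i' > k" using \<open>k < i\<close> by (cases i) auto
    then show ?thesis using assms i' by (simp add: coeff_eq_0 degree_kp)
  qed
qed

lemma kraw_rec:
  assumes "Suc k \<le> N" "0 < p" "p < 1"
  shows "\<exists>b. \<forall>x. x * kraw N p k x = kraw N p (Suc k) x + b * kraw N p k x
            + (if k = 0 then 0 else kraw_norm2 N p k / kraw_norm2 N p (k - 1) * kraw N p (k - 1) x)"
proof -
  define r where "r = pCons 0 (kp N p k) - kp N p (Suc k)"
  have pr: "poly r x = x * kraw N p k x - kraw N p (Suc k) x" for x
    by (simp add: r_def poly_kp)
  have dr: "degree r \<le> k" unfolding r_def by (rule xkp_diff_degree[OF assms(1,2)])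
  define c where "c i = (\<Sum>y=0..N. poly r (real y) * kraw N p i (real y) * bweight N p y)" for i
  have exp: "poly r x = (\<Sum>i\<le>k. c i / kraw_norm2 N p i * kraw N p i x)" for x
    unfolding c_def using kraw_expand[OF dr _ assms(2,3)] assms by simp
  have c_eq: "c i = (\<Sum>y=0..N. kraw N p k (real y) * poly (pCons 0 (kp N p i)) (real y) * bweight N p y)"
    if i: "i \<le> k" for i
  proof -
    have "c i = (\<Sum>y=0..N. kraw N p k (real y) * poly (pCons 0 (kp N p i)) (real y) * bweight N p y)
              - (\<Sum>y=0..N. kraw N p (Suc k) (real y) * kraw N p i (real y) * bweight N p y)"
      unfolding c_def pr sum_subtractf[symmetric]
      by (intro sum.cong refl) (simp add: poly_kp algebra_simps)
    also have "(\<Sum>y=0..N. kraw N p (Suc k) (real y) * kraw N p i (real y) * bweight N p y) = 0"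
      using i assms by (intro kraw_ortho) auto
    finally show ?thesis by simp
  qed
  have c0: "c i = 0" if i: "Suc i < k" for i
  proof -
    have "degree (pCons 0 (kp N p i)) = Suc i"
      using i assms kp_nz[of i N p] degree_kp[of i N p] by (simp add: degree_pCons_eq)
    then show ?thesis unfolding c_eq[OF less_imp_le[OF Suc_lessD[OF i]]]
      using i assms by (intro kraw_ortho_poly) auto
  qed
  have c1: "c (k - 1) = kraw_norm2 N p k" if k: "k \<ge> 1"
  proof -
    have s: "Suc (k - 1) = k" using k by simp
    have d: "degree (pCons 0 (kp N p (k - 1)) - kp N p k) < k"
      using xkp_diff_degree[of "k - 1" N p] assms k s by simp
    have "c (k - 1) = (\<Sum>y=0..N. kraw N p k (real y) * kraw N p k (real y) * bweight N p y)
       + (\<Sum>y=0..N. kraw N p k (real y) * poly (pCons 0 (kp N p (k - 1)) - kp N p k) (real y) * bweight N p y)"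
      unfolding c_eq[of "k - 1", OF diff_le_self] sum.distrib[symmetric]
      by (intro sum.cong refl) (simp add: poly_kp algebra_simps)
    also have "(\<Sum>y=0..N. kraw N p k (real y) * poly (pCons 0 (kp N p (k - 1)) - kp N p k) (real y) * bweight N p y) = 0"
      using d assms by (intro kraw_ortho_poly) auto
    finally show ?thesis by (simp add: kraw_norm2_def power2_eq_square)
  qed
  show ?thesis
  proof (intro exI allI)
    fix x
    have "poly r x = c k / kraw_norm2 N p k * kraw N p k x
       + (if k = 0 then 0 else kraw_norm2 N p k / kraw_norm2 N p (k - 1) * kraw N p (k - 1) x)"
    proof (cases k)
      case 0 then show ?thesis using exp[of x] by simp
    next
      case (Suc k')
      have z: "(\<Sum>i<k'. c i / kraw_norm2 N p i * kraw N p i x) = 0"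
        using Suc by (intro sum.neutral) (simp add: c0)
      have "poly r x = (\<Sum>i<k'. c i / kraw_norm2 N p i * kraw N p i x)
           + c k' / kraw_norm2 N p k' * kraw N p k' x + c k / kraw_norm2 N p k * kraw N p k x"
        unfolding exp Suc sum.atMost_Suc lessThan_Suc_atMost[symmetric] sum.lessThan_Suc ..
      also have "\<dots> = c k / kraw_norm2 N p k * kraw N p k x
           + kraw_norm2 N p k / kraw_norm2 N p k' * kraw N p k' x"
        using c1 Suc z by simp
      finally show ?thesis using Suc by simp
    qed
    then show "x * kraw N p k x = kraw N p (Suc k) x + c k / kraw_norm2 N p k * kraw N p k x
       + (if k = 0 then 0 else kraw_norm2 N p k / kraw_norm2 N p (k - 1) * kraw N p (k - 1) x)"
      unfolding pr by simp
  qed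
qed

lemma christoffel_darboux:
  assumes "m < N" "0 < p" "p < 1"
  shows "(x - y) * (\<Sum>k\<le>m. kraw N p k x * kraw N p k y / kraw_norm2 N p k)
       = (kraw N p (Suc m) x * kraw N p m y - kraw N p m x * kraw N p (Suc m) y) / kraw_norm2 N p m"
  using assms(1)
proof (induction m)
  case 0
  obtain b where b: "\<And>x. x * kraw N p 0 x = kraw N p 1 x + b * kraw N p 0 x"
    using kraw_rec[of 0 N p] 0 assms by auto
  have "(x - y) * kraw N p 0 x * kraw N p 0 y = (x * kraw N p 0 x) * kraw N p 0 y - kraw N p 0 x * (y * kraw N p 0 y)"
    by (simp add: algebra_simps)
  also have "\<dots> = kraw N p 1 x * kraw N p 0 y - kraw N p 0 x * kraw N p 1 y"
    unfolding b by (simp add: algebra_simps)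
  finally show ?case by simp
next
  case (Suc m)
  let ?h0 = "kraw_norm2 N p m" and ?h1 = "kraw_norm2 N p (Suc m)"
  have h0: "?h0 > 0" and h1: "?h1 > 0" using Suc.prems assms norm_pos by auto
  obtain b where b: "\<And>x. x * kraw N p (Suc m) x = kraw N p (Suc (Suc m)) x + b * kraw N p (Suc m) x
            + ?h1 / ?h0 * kraw N p m x"
    using kraw_rec[of "Suc m" N p] Suc.prems assms by auto
  let ?A0 = "kraw N p m x" and ?A1 = "kraw N p (Suc m) x" and ?A2 = "kraw N p (Suc (Suc m)) x"
  let ?B0 = "kraw N p m y" and ?B1 = "kraw N p (Suc m) y" and ?B2 = "kraw N p (Suc (Suc m)) y"
  have key: "(x - y) * ?A1 * ?B1 = ?A2 * ?B1 - ?A1 * ?B2 + ?h1 / ?h0 * (?A0 * ?B1 - ?A1 * ?B0)"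
  proof -
    have "(x - y) * ?A1 * ?B1 = (x * ?A1) * ?B1 - ?A1 * (y * ?B1)" by (simp add: algebra_simps)
    also have "\<dots> = ?A2 * ?B1 - ?A1 * ?B2 + ?h1 / ?h0 * (?A0 * ?B1 - ?A1 * ?B0)"
      unfolding b by (simp add: algebra_simps)
    finally show ?thesis .
  qed
  have "(x - y) * (\<Sum>k\<le>Suc m. kraw N p k x * kraw N p k y / kraw_norm2 N p k)
      = (?A1 * ?B0 - ?A0 * ?B1) / ?h0 + (x - y) * ?A1 * ?B1 / ?h1"
    using Suc.IH Suc.prems by (simp add: algebra_simps)
  also have "\<dots> = (?A1 * ?B0 - ?A0 * ?B1) / ?h0 + (?A2 * ?B1 - ?A1 * ?B2) / ?h1
      + (?A0 * ?B1 - ?A1 * ?B0) / ?h0"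
    unfolding key using h0 h1 by (simp add: field_simps)
  also have "\<dots> = (?A2 * ?B1 - ?A1 * ?B2) / ?h1" using h0 h1 by (simp add: field_simps)
  finally show ?case .
qed

section \<open>Kernel in terms of A and B\<close>

lemma fall_factor_nz: "fall z k \<noteq> 0 \<Longrightarrow> i < k \<Longrightarrow> z - of_nat i \<noteq> 0"
  unfolding fall_def by auto

lemma solve_mult: "(a::real) \<noteq> 0 \<Longrightarrow> a * s = r \<Longrightarrow> s = r / a"
  by (simp add: eq_divide_eq mult.commute)

lemma ker_AB:
  assumes n: "1 \<le> n" "n \<le> N" and p: "0 < p" "p < 1" and f: "fall (x - y0) (Suc j) \<noteq> 0"
  shows "kraw_ker N p 0 j (n - 1) x y0
       = calA N p j n x y0 * kraw N p n x + calB N p j n x y0 * kraw N p (n - 1) x"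
proof -
  let ?h = "kraw_norm2 N p (n - 1)"
  have h: "?h > 0" using n p norm_pos by auto
  define c1 where "c1 = kraw N p n x / ?h"
  define c2 where "c2 = kraw N p (n - 1) x / ?h"
  define F where "F y = c1 * kraw N p (n - 1) y - c2 * kraw N p n y" for y
  define g where "g y = 1 / (x - y)" for y
  have sn: "Suc (n - 1) = n" using n by simp
  have "kraw_ker N p 0 j (n - 1) x y0
      = fdiffs j (\<lambda>y. \<Sum>k\<in>{0..n-1}. (kraw N p k x / kraw_norm2 N p k) * kraw N p k y) y0"
    unfolding kraw_ker_def fdiffs_lin by (intro sum.cong refl) simp
  also have "\<dots> = fdiffs j (\<lambda>y. F y * g y) y0"
  proof (rule fdiffs_local)
    fix i assume i: "i \<le> j"
    let ?y = "y0 + of_nat i"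
    have nz: "x - ?y \<noteq> 0" using fall_factor_nz[OF f, of i] i by (simp add: algebra_simps)
    have cd: "(x - ?y) * (\<Sum>k\<le>n-1. kraw N p k x * kraw N p k ?y / kraw_norm2 N p k)
       = (kraw N p n x * kraw N p (n-1) ?y - kraw N p (n-1) x * kraw N p n ?y) / ?h"
      using christoffel_darboux[of "n - 1" N p x ?y] n p sn by simp
    have "(\<Sum>k\<in>{0..n-1}. (kraw N p k x / kraw_norm2 N p k) * kraw N p k ?y)
        = (\<Sum>k\<le>n-1. kraw N p k x * kraw N p k ?y / kraw_norm2 N p k)"
      by (simp add: atMost_atLeast0)
    also have "\<dots> = (kraw N p n x * kraw N p (n-1) ?y - kraw N p (n-1) x * kraw N p n ?y) / ?h / (x - ?y)"
      using solve_mult[OF nz cd] by simp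
    also have "\<dots> = F ?y * g ?y"
      unfolding F_def g_def c1_def c2_def using h nz by (simp add: field_simps)
    finally show "(\<Sum>k\<in>{0..n-1}. (kraw N p k x / kraw_norm2 N p k) * kraw N p k ?y) = F ?y * g ?y" .
  qed
  also have "\<dots> = (\<Sum>k=0..j. real (j choose k) * (fdiffs k F y0 * fdiffs (j - k) g (y0 + of_nat k)))"
    by (rule fdiffs_leibniz)
  also have "\<dots> = (\<Sum>k=0..j. fact j / (?h * fall (x - y0) (Suc j)) *
        (fdiffs k (kraw N p (n - 1)) y0 / fact k * fall (x - y0) k * kraw N p n x
       - fdiffs k (kraw N p n) y0 / fact k * fall (x - y0) k * kraw N p (n - 1) x))"
  proof (intro sum.cong refl)
    fix k assume "k \<in> {0..j}"
    then have k: "k \<le> j" by simp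
    have split: "fall (x - y0) (Suc j) = fall (x - y0) k * fall (x - y0 - of_nat k) (Suc (j - k))"
      using fall_add[of "x - y0" k "Suc (j - k)"] k by simp
    have nz1: "fall (x - y0) k \<noteq> 0" and nz2: "fall (x - y0 - of_nat k) (Suc (j - k)) \<noteq> 0"
      using f split by auto
    have gk: "fdiffs (j - k) g (y0 + of_nat k) = fact (j - k) / fall (x - y0 - of_nat k) (Suc (j - k))"
      unfolding g_def using fdiffs_recip[of x "y0 + of_nat k" "j - k"] nz2 by (simp add: algebra_simps)
    have Fk: "fdiffs k F y0 = c1 * fdiffs k (kraw N p (n - 1)) y0 - c2 * fdiffs k (kraw N p n) y0"
      unfolding F_def fdiffs_diff fdiffs_cmult ..
    have cj: "real (j choose k) = fact j / (fact k * fact (j - k))" using k by (simp add: binomial_fact)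
    show "real (j choose k) * (fdiffs k F y0 * fdiffs (j - k) g (y0 + of_nat k))
       = fact j / (?h * fall (x - y0) (Suc j)) *
        (fdiffs k (kraw N p (n - 1)) y0 / fact k * fall (x - y0) k * kraw N p n x
       - fdiffs k (kraw N p n) y0 / fact k * fall (x - y0) k * kraw N p (n - 1) x)"
      unfolding gk Fk cj split c1_def c2_def using nz1 nz2 h by (simp add: field_simps)
  qed
  also have "\<dots> = calA N p j n x y0 * kraw N p n x + calB N p j n x y0 * kraw N p (n - 1) x"
    unfolding calA_def calB_def
    by (simp add: sum_distrib_left sum_distrib_right sum_subtractf sum_negf algebra_simps)
  finally show ?thesis .
qed

section \<open>Positivity of the determinant\<close>

lemma delta_pos:
  fixes u v h :: "nat \<Rightarrow> real"
  assumes S: "finite S" and h: "\<And>k. k \<in> S \<Longrightarrow> h k > 0" and lm: "lam > 0" "mu > 0"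
  shows "(1 + lam * (\<Sum>k\<in>S. u k * u k / h k)) * (1 + mu * (\<Sum>k\<in>S. v k * v k / h k))
         - lam * mu * (\<Sum>k\<in>S. u k * v k / h k) * (\<Sum>k\<in>S. v k * u k / h k) > 0"
proof -
  define a where "a = (\<Sum>k\<in>S. u k * u k / h k)"
  define c where "c = (\<Sum>k\<in>S. v k * v k / h k)"
  define b where "b = (\<Sum>k\<in>S. u k * v k / h k)"
  have b': "(\<Sum>k\<in>S. v k * u k / h k) = b" unfolding b_def by (simp add: mult.commute)
  have a0: "a \<ge> 0" unfolding a_def using h by (intro sum_nonneg) (simp add: less_imp_le)
  define A where "A = 1 + lam * a"
  have A1: "A \<ge> 1" unfolding A_def using a0 lm by simp
  have "0 \<le> (\<Sum>k\<in>S. (A * v k - lam * b * u k)^2 / h k)"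
    using h by (intro sum_nonneg) (simp add: less_imp_le)
  also have "\<dots> = (\<Sum>k\<in>S. A^2 * (v k * v k / h k) - 2 * A * lam * b * (u k * v k / h k)
                     + lam^2 * b^2 * (u k * u k / h k))"
    by (intro sum.cong refl) (simp add: power2_eq_square algebra_simps diff_divide_distrib add_divide_distrib)
  also have "\<dots> = A^2 * c - 2 * A * lam * b * b + lam^2 * b^2 * a"
    unfolding a_def b_def c_def by (simp add: sum.distrib sum_subtractf sum_distrib_left)
  also have "\<dots> = A^2 * c - lam * b^2 * (A + 1)"
    unfolding A_def by (simp add: power2_eq_square algebra_simps)
  finally have key: "lam * b^2 * (A + 1) \<le> A^2 * c" by simp
  have "A * ((1 + lam * a) * (1 + mu * c) - lam * mu * b * b) = A^2 + mu * (A^2 * c) - lam * mu * b^2 * A"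
    unfolding A_def by (simp add: power2_eq_square algebra_simps)
  also have "\<dots> \<ge> A^2 + mu * (lam * b^2 * (A + 1)) - lam * mu * b^2 * A"
    using mult_left_mono[OF key, of mu] lm by simp
  finally have "A * ((1 + lam * a) * (1 + mu * c) - lam * mu * b * b) \<ge> A^2 + lam * mu * b^2"
    by (simp add: algebra_simps)
  moreover have "A^2 + lam * mu * b^2 > 0" using A1 lm by (simp add: add_pos_nonneg)
  ultimately have "A * ((1 + lam * a) * (1 + mu * c) - lam * mu * b * b) > 0" by linarith
  then have "(1 + lam * a) * (1 + mu * c) - lam * mu * b * b > 0"
    using A1 by (simp add: zero_less_mult_iff)
  then show ?thesis unfolding b' by (simp add: a_def b_def c_def)
qed

theorem mainTheorem2:
  fixes N n j :: nat and p lam mu :: real and KS :: "real poly"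
  assumes "N \<ge> 1" and "0 < p" and "p < 1" and "lam > 0" and "mu > 0"
    and "1 \<le> n" and "n \<le> N"
    and "degree KS = n" and "lead_coeff KS = 1"
    and "\<forall>q :: real poly. degree q < n \<longrightarrow> sob_ip N p lam mu j KS q = 0"
  shows "fdiffs j (poly KS) 0 = Phi1 N p lam mu j n
       \<and> fdiffs j (poly KS) (real N) = Phi2 N p lam mu j n
       \<and> (\<forall>x. poly KS x = kraw N p n x
               - lam * Phi1 N p lam mu j n * kraw_ker N p 0 j (n - 1) x 0
               - mu * Phi2 N p lam mu j n * kraw_ker N p 0 j (n - 1) x (real N))
       \<and> (\<forall>x. fall x (j + 1) \<noteq> 0 \<and> fall (x - real N) (j + 1) \<noteq> 0 \<longrightarrow>
               poly KS x = calC1 N p lam mu j n x * kraw N p n x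
                         + calD1 N p lam mu j n x * kraw N p (n - 1) x)"
proof -
  note p = assms(2,3) and lm = assms(4,5) and n = assms(6,7)
  define S where "S = {0..n-1}"
  define D0 where "D0 = fdiffs j (poly KS) 0"
  define DN where "DN = fdiffs j (poly KS) (real N)"
  define u where "u k = fdiffs j (kraw N p k) 0" for k
  define v where "v k = fdiffs j (kraw N p k) (real N)" for k
  define h where "h k = kraw_norm2 N p k" for k
  have hpos: "h k > 0" if "k \<in> S" for k
    using that n p norm_pos unfolding S_def h_def by auto
  define R where "R = KS - kp N p n"
  have dR: "degree R \<le> n - 1"
  proof (rule degree_le, intro allI impI)
    fix i assume i: "n - 1 < i"
    show "coeff R i = 0"
    proof (cases "i = n")
      case True then show ?thesis
        using assms(8,9) coeff_kp_top[of n N p] n p by (simp add: R_def)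
    next
      case False
      then have "i > n" using i by simp
      then show ?thesis using assms(8) degree_kp[of n N p] n p by (simp add: R_def coeff_eq_0)
    qed
  qed
  have ck: "(\<Sum>y=0..N. poly R (real y) * kraw N p k (real y) * bweight N p y)
             = - lam * D0 * u k - mu * DN * v k" if k: "k \<le> n - 1" for k
  proof -
    have "(\<Sum>y=0..N. poly R (real y) * kraw N p k (real y) * bweight N p y)
        = (\<Sum>y=0..N. poly KS (real y) * kraw N p k (real y) * bweight N p y)
          - (\<Sum>y=0..N. kraw N p n (real y) * kraw N p k (real y) * bweight N p y)"
      unfolding R_def sum_subtractf[symmetric]
      by (intro sum.cong refl) (simp add: poly_kp algebra_simps)
    also have "(\<Sum>y=0..N. kraw N p n (real y) * kraw N p k (real y) * bweight N p y) = 0"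
      using k n p by (intro kraw_ortho) auto
    also have "sob_ip N p lam mu j KS (kp N p k) = 0"
      using assms(10) degree_kp[of k N p] k n p by auto
    then have "(\<Sum>y=0..N. poly KS (real y) * kraw N p k (real y) * bweight N p y)
                = - lam * D0 * u k - mu * DN * v k"
      unfolding sob_ip_def poly_kp D0_def DN_def u_def v_def by simp
    finally show ?thesis by simp
  qed
  have rep0: "poly KS x = kraw N p n x - (\<Sum>k\<in>S. (lam * D0 * u k / h k + mu * DN * v k / h k) * kraw N p k x)"
    for x
  proof -
    have "poly KS x = kraw N p n x + poly R x" by (simp add: R_def poly_kp)
    also have "poly R x = (\<Sum>k\<le>n-1. (\<Sum>y=0..N. poly R (real y) * kraw N p k (real y) * bweight N p y)
                              / kraw_norm2 N p k * kraw N p k x)"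
      using kraw_expand[OF dR _ p] n by simp
    also have "\<dots> = (\<Sum>k\<le>n-1. (- lam * D0 * u k - mu * DN * v k) / kraw_norm2 N p k * kraw N p k x)"
      by (rule sum.cong) (simp_all add: ck)
    also have "\<dots> = - (\<Sum>k\<in>S. (lam * D0 * u k / h k + mu * DN * v k / h k) * kraw N p k x)"
      unfolding S_def atMost_atLeast0 sum_negf[symmetric]
      by (intro sum.cong refl) (simp add: h_def diff_divide_distrib add_divide_distrib algebra_simps)
    finally show ?thesis by simp
  qed
  have ker0: "kraw_ker N p 0 j (n - 1) x y = (\<Sum>k\<in>S. kraw N p k x * fdiffs j (kraw N p k) y / h k)" for x y
    unfolding kraw_ker_def S_def h_def by simp
  have rep: "poly KS x = kraw N p n x - lam * D0 * kraw_ker N p 0 j (n - 1) x 0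
                - mu * DN * kraw_ker N p 0 j (n - 1) x (real N)" for x
    unfolding rep0 ker0 u_def[symmetric] v_def[symmetric]
    by (simp add: sum_distrib_left sum.distrib algebra_simps)
  define k00 where "k00 = (\<Sum>k\<in>S. u k * u k / h k)"
  define k0N where "k0N = (\<Sum>k\<in>S. u k * v k / h k)"
  define kN0 where "kN0 = (\<Sum>k\<in>S. v k * u k / h k)"
  define kNN where "kNN = (\<Sum>k\<in>S. v k * v k / h k)"
  have kers: "kraw_ker N p j j (n - 1) 0 0 = k00" "kraw_ker N p j j (n - 1) 0 (real N) = k0N"
    "kraw_ker N p j j (n - 1) (real N) 0 = kN0" "kraw_ker N p j j (n - 1) (real N) (real N) = kNN"
    unfolding kraw_ker_def k00_def k0N_def kN0_def kNN_def S_def u_def v_def h_def by simp_all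
  have fd: "fdiffs j (poly KS) z = fdiffs j (kraw N p n) z
      - (\<Sum>k\<in>S. (lam * D0 * u k / h k + mu * DN * v k / h k) * fdiffs j (kraw N p k) z)" for z
  proof -
    have e: "poly KS = (\<lambda>x. kraw N p n x - (\<Sum>k\<in>S. (lam * D0 * u k / h k + mu * DN * v k / h k) * kraw N p k x))"
      by (rule ext) (rule rep0)
    show ?thesis unfolding e fdiffs_diff fdiffs_lin ..
  qed
  have eq0: "D0 = u n - lam * D0 * k00 - mu * DN * k0N"
    using fd[of 0] unfolding D0_def[symmetric] u_def[symmetric] k00_def k0N_def
    by (simp add: sum_distrib_left sum.distrib algebra_simps)
  have eqN: "DN = v n - lam * D0 * kN0 - mu * DN * kNN"
    using fd[of "real N"] unfolding DN_def[symmetric] v_def[symmetric] kN0_def kNN_def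
    by (simp add: sum_distrib_left sum.distrib algebra_simps)
  have dpos: "delta_n N p lam mu j n > 0"
    unfolding delta_n_def kers k00_def kNN_def k0N_def kN0_def
    using delta_pos[of S h lam mu u v] hpos lm by (simp add: S_def)
  have un: "u n = D0 + lam * D0 * k00 + mu * DN * k0N" using eq0 by simp
  have vn: "v n = DN + lam * D0 * kN0 + mu * DN * kNN" using eqN by simp
  have Phi1: "D0 = Phi1 N p lam mu j n"
  proof -
    have "Phi1 N p lam mu j n = (u n * (1 + mu * kNN) - mu * k0N * v n) / delta_n N p lam mu j n"
      unfolding Phi1_def kers u_def v_def ..
    also have "u n * (1 + mu * kNN) - mu * k0N * v n = D0 * delta_n N p lam mu j n"
      unfolding un vn delta_n_def kers by (simp add: algebra_simps)
    finally show ?thesis using dpos by simp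
  qed
  have Phi2: "DN = Phi2 N p lam mu j n"
  proof -
    have "Phi2 N p lam mu j n = ((1 + lam * k00) * v n - lam * kN0 * u n) / delta_n N p lam mu j n"
      unfolding Phi2_def kers u_def v_def ..
    also have "(1 + lam * k00) * v n - lam * kN0 * u n = DN * delta_n N p lam mu j n"
      unfolding un vn delta_n_def kers by (simp add: algebra_simps)
    finally show ?thesis using dpos by simp
  qed
  have part3: "\<forall>x. poly KS x = kraw N p n x
               - lam * Phi1 N p lam mu j n * kraw_ker N p 0 j (n - 1) x 0
               - mu * Phi2 N p lam mu j n * kraw_ker N p 0 j (n - 1) x (real N)"
    using rep unfolding Phi1 Phi2 by blast
  have part4: "\<forall>x. fall x (j + 1) \<noteq> 0 \<and> fall (x - real N) (j + 1) \<noteq> 0 \<longrightarrow>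
               poly KS x = calC1 N p lam mu j n x * kraw N p n x
                         + calD1 N p lam mu j n x * kraw N p (n - 1) x"
  proof (intro allI impI)
    fix x assume f: "fall x (j + 1) \<noteq> 0 \<and> fall (x - real N) (j + 1) \<noteq> 0"
    have a0: "kraw_ker N p 0 j (n - 1) x 0 = calA N p j n x 0 * kraw N p n x + calB N p j n x 0 * kraw N p (n - 1) x"
      using ker_AB[of n N p x 0 j] n p f by simp
    have aN: "kraw_ker N p 0 j (n - 1) x (real N) = calA N p j n x (real N) * kraw N p n x
               + calB N p j n x (real N) * kraw N p (n - 1) x"
      using ker_AB[of n N p x "real N" j] n p f by simp
    show "poly KS x = calC1 N p lam mu j n x * kraw N p n x + calD1 N p lam mu j n x * kraw N p (n - 1) x"
    proof -
      have e: "poly KS x = kraw N p n x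
               - lam * Phi1 N p lam mu j n * kraw_ker N p 0 j (n - 1) x 0
               - mu * Phi2 N p lam mu j n * kraw_ker N p 0 j (n - 1) x (real N)"
        using part3 by blast
      show ?thesis unfolding e calC1_def calD1_def a0 aN by (simp add: algebra_simps)
    qed
  qed
  show ?thesis using Phi1 Phi2 part3 part4 unfolding D0_def DN_def by blast
qed

end
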